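(* Assume $d\ge1$. For $0\le i\le d-2$, $$a^*_i+a^*_{i+1}=d-\frac{r-s}{2}+\frac{(r-s)(r+s)(2d+r+s+2)}{2(2d-2i+r+s-2)(2d-2i+r+s+2)},$$ and $$a^*_{d-1}+a^*_d=d+\frac{(d-1)(r-s)}{r+s+4}.$$
   Context: Fix an integer $d\ge0$ and $r,s\in(-1,\infty)$. Write $(x)_i=x(x+1)\cdots(x+i-1)$, $(x)_0=1$. For $0\le i\le d$ put $\theta^*_i=i$. Put $b^*_i=\frac{(d-i)(i-d-s)(2d-2i+r+s+2)_i}{(2d-2i+r+s)_{i+1}}$ ($0\le i\le d-1$), $c^*_i=\frac{i(i-d-r-1)(d-i+r+s+1)_{d-i}}{(d-i+r+s+2)_{d-i+1}}$ ($1\le i\le d$), $b^*_d=c^*_0=0$, and $a^*_i=\theta^*_0-b^*_i-c^*_i$ for $0\le i\le d$. *)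

theory Defs
  imports Complex_Main
begin

definition thetaS :: "nat \<Rightarrow> real" where
  "thetaS i = real i"

definition bS :: "nat \<Rightarrow> real \<Rightarrow> real \<Rightarrow> nat \<Rightarrow> real" where
  "bS d r s i = (if i < d then
     (real d - real i) * (real i - real d - s) * pochhammer (2 * real d - 2 * real i + r + s + 2) i
       / pochhammer (2 * real d - 2 * real i + r + s) (i + 1)
   else 0)"

definition cS :: "nat \<Rightarrow> real \<Rightarrow> real \<Rightarrow> nat \<Rightarrow> real" where
  "cS d r s i = (if i = 0 then 0 else
     real i * (real i - real d - r - 1) * pochhammer (real d - real i + r + s + 1) (d - i)
       / pochhammer (real d - real i + r + s + 2) (d - i + 1))"

definition aS :: "nat \<Rightarrow> real \<Rightarrow> real \<Rightarrow> nat \<Rightarrow> real" where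
  "aS d r s i = thetaS 0 - bS d r s i - cS d r s i"

end

theory Submission
  imports Defs
begin

lemma poch_b:
  fixes x :: real assumes "x > 0"
  shows "pochhammer (x + 2) n / pochhammer x (n + 1) = (x + n + 1) / (x * (x + 1))"
proof -
  have p1: "pochhammer (x+1) n > 0" using assms by (intro pochhammer_pos) simp
  have e1: "pochhammer x (n+1) = x * pochhammer (x+1) n" by (simp add: pochhammer_rec)
  have "pochhammer (x+1) (Suc n) = (x+1) * pochhammer (x+1+1) n" by (rule pochhammer_rec)
  moreover have "pochhammer (x+1) (Suc n) = (x+1 + n) * pochhammer (x+1) n" by (rule pochhammer_rec')
  ultimately have e2: "pochhammer (x+2) n = (x+1+n) * pochhammer (x+1) n / (x+1)"
    using assms by (simp add: field_simps)
  have "x * (x + 1) \<noteq> 0" using assms by simp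
  then show ?thesis using p1 assms unfolding e1 e2
    by (simp add: frac_eq_eq)
qed

lemma poch_c:
  fixes y :: real assumes "y > 0"
  shows "pochhammer y m / pochhammer (y + 1) (m + 1) = y / ((y + m) * (y + m + 1))"
proof -
  have p1: "pochhammer y m > 0" using assms by (intro pochhammer_pos) simp
  have "pochhammer y (Suc m) = y * pochhammer (y+1) m" by (rule pochhammer_rec)
  moreover have "pochhammer y (Suc m) = (y + m) * pochhammer y m" by (rule pochhammer_rec')
  ultimately have e1: "pochhammer (y+1) m = (y + m) * pochhammer y m / y"
    using assms by (simp add: field_simps)
  have e2: "pochhammer (y+1) (m+1) = (y + 1 + m) * pochhammer (y+1) m"
    using pochhammer_rec'[of "y+1" m] by simp
  have "(y + m) * (y + m + 1) \<noteq> 0" using assms by (simp add: add_pos_nonneg)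
  moreover have "(y + 1 + real m) \<noteq> 0" using assms by (simp add: add_pos_nonneg)
  ultimately show ?thesis using p1 assms unfolding e2 e1
    by (simp add: frac_eq_eq)
qed

definition G :: "real \<Rightarrow> real \<Rightarrow> real \<Rightarrow> real \<Rightarrow> real" where
 "G D r s t = - ((D - t) * (t - D - s) * (2*D - 2*t + r + s + t + 1)
      / ((2*D - 2*t + r + s) * (2*D - 2*t + r + s + 1)))
    - t * (t - D - r - 1) * (D - t + r + s + 1)
      / ((2*D - 2*t + r + s + 1) * (2*D - 2*t + r + s + 2))"

lemma frac_mul: "b \<noteq> 0 \<Longrightarrow> M = b * K \<Longrightarrow> (a / b) * M = a * K" for a b K M :: real
  by simp

lemma comb4:
  fixes M :: real
  assumes M: "M \<noteq> 0" and e1: "M = b1*Ka" and e2: "M = b2*Kb" and e3: "M = b3*Kc" and e4: "M = b4*Kd" and e5: "M = b5*Ke"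
    and P: "-(a1*Ka) - a2*Kb + (-(a3*Kc) - a4*Kd) = D*M - R*M/2 + a5*Ke"
  shows "-(a1/b1) - a2/b2 + (-(a3/b3) - a4/b4) = D - R/2 + a5/b5"
proof -
  have nz: "b1 \<noteq> 0" "b2 \<noteq> 0" "b3 \<noteq> 0" "b4 \<noteq> 0" "b5 \<noteq> 0" using M e1 e2 e3 e4 e5 by auto
  have "(-(a1/b1) - a2/b2 + (-(a3/b3) - a4/b4)) * M = (D - R/2 + a5/b5) * M"
    using frac_mul[OF nz(1) e1, of a1] frac_mul[OF nz(2) e2, of a2] frac_mul[OF nz(3) e3, of a3]
      frac_mul[OF nz(4) e4, of a4] frac_mul[OF nz(5) e5, of a5] P
    by (simp add: algebra_simps)
  thus ?thesis using M by simp
qed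

lemma comb3:
  fixes M :: real
  assumes M: "M \<noteq> 0" and e1: "M = b1*Ka" and e2: "M = b2*Kb" and e3: "M = b3*Kc" and e4: "M = b4*Kd"
    and P: "-(a1*Ka) - a2*Kb + -(a3*Kc) = D*M + a4*Kd"
  shows "-(a1/b1) - a2/b2 + -(a3/b3) = D + a4/b4"
proof -
  have nz: "b1 \<noteq> 0" "b2 \<noteq> 0" "b3 \<noteq> 0" "b4 \<noteq> 0" using M e1 e2 e3 e4 by auto
  have "(-(a1/b1) - a2/b2 + -(a3/b3)) * M = (D + a4/b4) * M"
    using frac_mul[OF nz(1) e1, of a1] frac_mul[OF nz(2) e2, of a2] frac_mul[OF nz(3) e3, of a3]
      frac_mul[OF nz(4) e4, of a4] P
    by (simp add: algebra_simps)
  thus ?thesis using M by simp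
qed

lemma aS_lt:
  assumes "i < d" "r > -1" "s > -1"
  shows "aS d r s i = G (real d) r s (real i)"
proof -
  have dd: "real d - real i \<ge> 1" using assms by linarith
  have x: "2*real d - 2*real i + r + s > 0" using assms dd by linarith
  have y: "real d - real i + r + s + 1 > 0" using assms dd by linarith
  have b: "bS d r s i = (real d - real i) * (real i - real d - s) * (2*real d - 2*real i + r + s + real i + 1)
      / ((2*real d - 2*real i + r + s) * (2*real d - 2*real i + r + s + 1))"
  proof -
    have "bS d r s i = (real d - real i) * (real i - real d - s) *
       (pochhammer (2 * real d - 2 * real i + r + s + 2) i / pochhammer (2 * real d - 2 * real i + r + s) (i + 1))"
      unfolding bS_def using assms(1) by simp
    also have "\<dots> = (real d - real i) * (real i - real d - s) * ((2*real d - 2*real i + r + s + real i + 1)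
      / ((2*real d - 2*real i + r + s) * (2*real d - 2*real i + r + s + 1)))"
      by (simp only: poch_b[OF x])
    finally show ?thesis by simp
  qed
  have c: "cS d r s i = real i * (real i - real d - r - 1) * (real d - real i + r + s + 1)
      / ((2*real d - 2*real i + r + s + 1) * (2*real d - 2*real i + r + s + 2))"
  proof -
    have "cS d r s i = real i * (real i - real d - r - 1) *
       (pochhammer (real d - real i + r + s + 1) (d - i) / pochhammer (real d - real i + r + s + 2) (d - i + 1))"
      unfolding cS_def by (cases "i = 0") simp_all
    also have "real d - real i + r + s + 2 = (real d - real i + r + s + 1) + 1" by simp
    also note poch_c[OF y]
    also have "real (d - i) = real d - real i" using assms by simp
    also have "real d - real i + r + s + 1 + (real d - real i) = 2*real d - 2*real i + r + s + 1" by simp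
    also have "2*real d - 2*real i + r + s + 1 + 1 = 2*real d - 2*real i + r + s + 2" by simp
    finally show ?thesis by simp
  qed
  show ?thesis unfolding aS_def thetaS_def b c G_def by simp
qed

lemma aS_d:
  shows "aS d r s d = - (real d * (- r - 1) / (r + s + 2))"
  unfolding aS_def bS_def cS_def thetaS_def by simp

lemma pairG:
  fixes D t r s :: real
  assumes "2*D - 2*t + r + s - 2 > 0"
  shows "G D r s t + G D r s (t + 1) = D - (r - s) / 2
              + (r - s) * (r + s) * (2 * D + r + s + 2)
                / (2 * (2 * D - 2 * t + r + s - 2) * (2 * D - 2 * t + r + s + 2))"
proof -
  define x where "x = 2*D - 2*t + r + s"
  have p0: "x - 2 > 0" using assms unfolding x_def by linarith
  have s_eq: "s = x - 2*D + 2*t - r" unfolding x_def by simp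
  show ?thesis unfolding G_def
  proof (rule comb4[where M = "2*(x-2)*(x-1)*x*(x+1)*(x+2)" and Ka = "2*(x-2)*(x-1)*(x+2)"
      and Kb = "2*(x-2)*(x-1)*x" and Kc = "2*x*(x+1)*(x+2)" and Kd = "2*(x-2)*(x+1)*(x+2)" and Ke = "(x-1)*x*(x+1)"])
    show "2*(x-2)*(x-1)*x*(x+1)*(x+2) \<noteq> 0" using p0 by simp
  qed (unfold s_eq, (algebra)+)
qed

lemma lastG:
  fixes D r s :: real
  assumes "r + s + 2 > 0"
  shows "G D r s (D - 1) + - (D * (- r - 1) / (r + s + 2)) = D + (D - 1) * (r - s) / (r + s + 4)"
proof -
  define u where "u = r + s + 2"
  have q: "u > 0" using assms unfolding u_def by linarith
  have s_eq: "s = u - 2 - r" unfolding u_def by simp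
  show ?thesis unfolding G_def
  proof (rule comb3[where M = "u*(u+1)*(u+2)" and Ka = "u+2" and Kb = u and Kc = "(u+1)*(u+2)" and Kd = "u*(u+1)"])
    show "u*(u+1)*(u+2) \<noteq> 0" using q by (simp add: add_pos_pos)
  qed (unfold s_eq, (algebra)+)
qed

theorem lemma2p6:
  fixes d :: nat and r s :: real
  assumes "d \<ge> 1" and "r > -1" and "s > -1"
  shows "(\<forall>i. i + 2 \<le> d \<longrightarrow>
            aS d r s i + aS d r s (i + 1) =
              real d - (r - s) / 2
              + (r - s) * (r + s) * (2 * real d + r + s + 2)
                / (2 * (2 * real d - 2 * real i + r + s - 2) * (2 * real d - 2 * real i + r + s + 2)))
       \<and> aS d r s (d - 1) + aS d r s d = real d + (real d - 1) * (r - s) / (r + s + 4)"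
proof (intro conjI allI impI)
  fix i assume i: "i + 2 \<le> d"
  have dd: "real d - real i \<ge> 2" using i by linarith
  have p0: "2*real d - 2*real i + r + s - 2 > 0" using assms dd by linarith
  have a1: "aS d r s (i+1) = G (real d) r s (real i + 1)"
    using aS_lt[of "i+1" d r s] i assms by (simp add: add.commute)
  have a0: "aS d r s i = G (real d) r s (real i)" using aS_lt[of i d r s] i assms by simp
  show "aS d r s i + aS d r s (i + 1) =
              real d - (r - s) / 2
              + (r - s) * (r + s) * (2 * real d + r + s + 2)
                / (2 * (2 * real d - 2 * real i + r + s - 2) * (2 * real d - 2 * real i + r + s + 2))"
    unfolding a1 a0 by (rule pairG[OF p0])
next
  have e: "real (d-1) = real d - 1" using assms by simp
  have a0: "aS d r s (d-1) = G (real d) r s (real d - 1)"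
    using aS_lt[of "d-1" d r s] assms e by simp
  have q: "r + s + 2 > 0" using assms by linarith
  show "aS d r s (d - 1) + aS d r s d = real d + (real d - 1) * (r - s) / (r + s + 4)"
    unfolding a0 aS_d by (rule lastG[OF q])
qed

end
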